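(* There are absolute constants $c,c'>0$ such that the following holds for every integer $k\ge 2$. Let $H$ be an $\mathcal{O}_k$-free graph with $V(H)=L\cup R$ such that: $S=L\cap R$ is an independent set of $H$; there is no edge between $L\setminus S$ and $R\setminus S$; $H[L]$ is a disjoint union of paths whose set of endpoints is exactly $S$; and $H[R]$ is a disjoint union of subdivided stars whose set of leaves is exactly $S$ and whose centers have average degree at least $4c\,k\log k$. Then $H$ has a vertex of degree at least $c'|S|/k^2$.
   Context: All graphs are finite and simple. A subdivided star is a graph with at least two vertices obtained from a star $K_{1,m}$ ($m\ge 1$) by replacing its edges with paths of arbitrary positive length; its center is the vertex of the original star center (for a path, an internal vertex, whose degree is 2). A graph $G$ is $\mathcal{O}_k$-free if it does not contain $k$ pairwise vertex-disjoint cycles with no edges between any two of them; equivalently, it has no induced subgraph isomorphic to a disjoint union of $k$ cycles. *)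

theory Defs
  imports Main Complex_Main
begin

definition graph :: "'a set \<Rightarrow> ('a \<Rightarrow> 'a \<Rightarrow> bool) \<Rightarrow> bool" where
  "graph V E \<longleftrightarrow> finite V \<and> (\<forall>x y. E x y \<longrightarrow> x \<in> V \<and> y \<in> V \<and> E y x \<and> x \<noteq> y)"

definition degree :: "'a set \<Rightarrow> ('a \<Rightarrow> 'a \<Rightarrow> bool) \<Rightarrow> 'a \<Rightarrow> nat" where
  "degree V E v = card {u \<in> V. E v u}"

definition is_cycle :: "('a \<Rightarrow> 'a \<Rightarrow> bool) \<Rightarrow> 'a set \<Rightarrow> bool" where
  "is_cycle E C \<longleftrightarrow> (\<exists>xs. distinct xs \<and> set xs = C \<and> length xs \<ge> 3 \<and>
      (\<forall>i < length xs. E (xs ! i) (xs ! ((i + 1) mod length xs))))"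

definition O_free :: "nat \<Rightarrow> 'a set \<Rightarrow> ('a \<Rightarrow> 'a \<Rightarrow> bool) \<Rightarrow> bool" where
  "O_free k V E \<longleftrightarrow> \<not> (\<exists>Cs :: nat \<Rightarrow> 'a set.
      (\<forall>i < k. Cs i \<subseteq> V \<and> is_cycle E (Cs i)) \<and>
      (\<forall>i < k. \<forall>j < k. i \<noteq> j \<longrightarrow>
          Cs i \<inter> Cs j = {} \<and> (\<forall>x \<in> Cs i. \<forall>y \<in> Cs j. \<not> E x y)))"

definition induced_path :: "('a \<Rightarrow> 'a \<Rightarrow> bool) \<Rightarrow> 'a list \<Rightarrow> bool" where
  "induced_path E xs \<longleftrightarrow> distinct xs \<and>
     (\<forall>i < length xs. \<forall>j < length xs. E (xs ! i) (xs ! j) \<longleftrightarrow> (i + 1 = j \<or> j + 1 = i))"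

definition paths_decomp :: "('a \<Rightarrow> 'a \<Rightarrow> bool) \<Rightarrow> 'a set \<Rightarrow> 'a set \<Rightarrow> bool" where
  "paths_decomp E L S \<longleftrightarrow> (\<exists>\<P> :: 'a list set.
      (\<forall>xs \<in> \<P>. length xs \<ge> 2 \<and> induced_path E xs) \<and>
      L = (\<Union>xs \<in> \<P>. set xs) \<and>
      (\<forall>xs \<in> \<P>. \<forall>ys \<in> \<P>. xs \<noteq> ys \<longrightarrow>
          set xs \<inter> set ys = {} \<and> (\<forall>x \<in> set xs. \<forall>y \<in> set ys. \<not> E x y)) \<and>
      S = (\<Union>xs \<in> \<P>. {hd xs, last xs}))"

text \<open>Subdivided star with center c and legs: each leg l gives the path c # l.\<close>
definition star_verts :: "'a \<Rightarrow> 'a list list \<Rightarrow> 'a set" where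
  "star_verts c legs = insert c (set (concat legs))"

definition star_edge :: "'a \<Rightarrow> 'a list list \<Rightarrow> 'a \<Rightarrow> 'a \<Rightarrow> bool" where
  "star_edge c legs x y \<longleftrightarrow> (\<exists>l \<in> set legs. \<exists>i. Suc i < length (c # l) \<and>
      {x, y} = {(c # l) ! i, (c # l) ! Suc i})"

text \<open>At least two legs: a subdivided K_{1,1} is a path whose center
  is taken to be an internal vertex (degree 2), i.e. it is a star with two legs.\<close>
definition induced_sstar :: "('a \<Rightarrow> 'a \<Rightarrow> bool) \<Rightarrow> 'a \<Rightarrow> 'a list list \<Rightarrow> bool" where
  "induced_sstar E c legs \<longleftrightarrow> length legs \<ge> 2 \<and> (\<forall>l \<in> set legs. l \<noteq> []) \<and>
      distinct (c # concat legs) \<and>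
      (\<forall>x \<in> star_verts c legs. \<forall>y \<in> star_verts c legs. E x y \<longleftrightarrow> star_edge c legs x y)"

definition star_leaves :: "'a list list \<Rightarrow> 'a set" where
  "star_leaves legs = last ` set legs"

definition stars_decomp ::
  "('a \<Rightarrow> 'a \<Rightarrow> bool) \<Rightarrow> 'a set \<Rightarrow> 'a set \<Rightarrow> ('a \<times> 'a list list) set \<Rightarrow> bool" where
  "stars_decomp E R S \<Sigma> \<longleftrightarrow>
      (\<forall>(c, legs) \<in> \<Sigma>. induced_sstar E c legs) \<and>
      R = (\<Union>(c, legs) \<in> \<Sigma>. star_verts c legs) \<and>
      (\<forall>(c, legs) \<in> \<Sigma>. \<forall>(d, legs') \<in> \<Sigma>. (c, legs) \<noteq> (d, legs') \<longrightarrow>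
          star_verts c legs \<inter> star_verts d legs' = {} \<and>
          (\<forall>x \<in> star_verts c legs. \<forall>y \<in> star_verts d legs'. \<not> E x y)) \<and>
      S = (\<Union>(c, legs) \<in> \<Sigma>. star_leaves legs)"

end

theory Submission
  imports Defs
begin


lemma ln2_half: "ln (2::real) \<ge> 1/2"
proof -
  have "ln (1/2::real) \<le> 1/2 - 1" by (rule ln_le_minus_one) simp
  moreover have "ln (1/2::real) = - ln 2" by (simp add: ln_div)
  ultimately show ?thesis by simp
qed

lemma cycle_exists:
  assumes sym: "\<And>x y. E x y \<Longrightarrow> E y x" and irr: "\<And>x. \<not> E x x"
    and fin: "finite Y" and ne: "Y \<noteq> {}"
    and deg2: "\<And>v. v \<in> Y \<Longrightarrow> \<exists>u\<in>Y. \<exists>w\<in>Y. u \<noteq> w \<and> E v u \<and> E v w"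
  shows "\<exists>C \<subseteq> Y. is_cycle E C"
proof (rule ccontr)
  assume nc: "\<not> (\<exists>C \<subseteq> Y. is_cycle E C)"
  have "\<exists>xs. length xs = Suc n \<and> distinct xs \<and> set xs \<subseteq> Y \<and>
          (\<forall>i. Suc i < length xs \<longrightarrow> E (xs!i) (xs!Suc i))" for n
  proof (induction n)
    case 0
    from ne obtain v where "v \<in> Y" by auto
    then show ?case by (intro exI[of _ "[v]"]) auto
  next
    case (Suc n)
    then obtain xs where L: "length xs = Suc n" and D: "distinct xs" and S: "set xs \<subseteq> Y"
      and P: "\<forall>i. Suc i < length xs \<longrightarrow> E (xs!i) (xs!Suc i)" by blast
    define x where "x = xs ! n"
    have xY: "x \<in> Y" using S L x_def by (metis lessI nth_mem subsetD)
    obtain u w where uY: "u \<in> Y" and wY: "w \<in> Y" and uw: "u \<noteq> w" and Eu: "E x u" and Ew: "E x w"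
      using deg2[OF xY] by blast
    have ext: "\<exists>ys. length ys = Suc (Suc n) \<and> distinct ys \<and> set ys \<subseteq> Y \<and>
          (\<forall>i. Suc i < length ys \<longrightarrow> E (ys!i) (ys!Suc i))" if tY: "t \<in> Y" and tn: "t \<notin> set xs" and Et: "E x t" for t
    proof (intro exI[of _ "xs @ [t]"] conjI allI impI)
      show "length (xs @ [t]) = Suc (Suc n)" using L by simp
      show "distinct (xs @ [t])" using D tn by simp
      show "set (xs @ [t]) \<subseteq> Y" using S tY by simp
      fix i assume i: "Suc i < length (xs @ [t])"
      show "E ((xs @ [t]) ! i) ((xs @ [t]) ! Suc i)"
      proof (cases "Suc i < length xs")
        case True then show ?thesis using P by (simp add: nth_append)
      next
        case False
        then have "i = n" using i L by simp
        then show ?thesis using L Et x_def by (simp add: nth_append)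
      qed
    qed
    show ?case
    proof (cases "u \<in> set xs \<and> w \<in> set xs")
      case False
      then show ?thesis using ext uY wY Eu Ew by blast
    next
      case True
      have n1: "n \<ge> 1"
      proof (rule ccontr)
        assume "\<not> n \<ge> 1"
        then have "n = 0" by simp
        then have "set xs = {x}" using L x_def by (cases xs) auto
        then show False using True Eu irr by auto
      qed
      obtain t where tin: "t \<in> set xs" and Et: "E x t" and tp: "t \<noteq> xs ! (n - 1)"
        using True Eu Ew uw by metis
      obtain i where iL: "i < length xs" and ti: "t = xs ! i" using tin by (metis in_set_conv_nth)
      have "i \<noteq> n" using Et ti x_def irr by auto
      moreover have "i \<noteq> n - 1" using tp ti by auto
      ultimately have i2: "i + 2 \<le> n" using iL L n1 by linarith
      define ys where "ys = drop i xs"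
      have ly: "length ys = Suc n - i" using L ys_def by simp
      have "is_cycle E (set ys)"
        unfolding is_cycle_def
      proof (intro exI[of _ ys] conjI allI impI)
        show "distinct ys" using D ys_def by simp
        show "set ys = set ys" by simp
        show "3 \<le> length ys" using ly i2 by simp
        fix m assume m: "m < length ys"
        show "E (ys ! m) (ys ! ((m + 1) mod length ys))"
        proof (cases "Suc m < length ys")
          case True
          then have "(m+1) mod length ys = Suc m" by simp
          then show ?thesis using P True ys_def L iL by (auto simp: add.commute)
        next
          case False
          then have mm: "m = n - i" using m ly by simp
          then have "(m+1) mod length ys = 0" using ly i2 by (simp add: Suc_diff_le)
          moreover have "ys ! m = x" using mm ys_def x_def i2 L by simp
          moreover have "ys ! 0 = t" using ys_def ti iL by simp
          ultimately show ?thesis using Et by simp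
        qed
      qed
      moreover have "set ys \<subseteq> Y" using S ys_def by (meson set_drop_subset subset_trans)
      ultimately show ?thesis using nc by blast
    qed
  qed
  then obtain xs where "length xs = Suc (card Y)" "distinct xs" "set xs \<subseteq> Y" by blast
  then show False using fin by (metis card_mono distinct_card lessI not_less)
qed



definition eg :: "'p set \<Rightarrow> ('p \<Rightarrow> 'n) \<Rightarrow> ('p \<Rightarrow> 'n) \<Rightarrow> 'n set \<Rightarrow> nat" where
  "eg P a b Q = card {p\<in>P. a p \<in> Q \<and> b p \<in> Q}"
definition incg :: "'p set \<Rightarrow> ('p \<Rightarrow> 'n) \<Rightarrow> ('p \<Rightarrow> 'n) \<Rightarrow> 'n set \<Rightarrow> 'n set \<Rightarrow> nat" where
  "incg P a b N Q = card {p\<in>P. a p \<in> N \<and> b p \<in> N \<and> (a p \<in> Q \<or> b p \<in> Q)}"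
definition dgg :: "'p set \<Rightarrow> ('p \<Rightarrow> 'n) \<Rightarrow> ('p \<Rightarrow> 'n) \<Rightarrow> 'n \<Rightarrow> nat" where
  "dgg P a b x = card {p\<in>P. a p = x \<or> b p = x}"
definition crs :: "'p set \<Rightarrow> ('p \<Rightarrow> 'n) \<Rightarrow> ('p \<Rightarrow> 'n) \<Rightarrow> 'n \<Rightarrow> 'n set \<Rightarrow> 'p set" where
  "crs P a b y X = {p\<in>P. (a p = y \<and> b p \<in> X) \<or> (b p = y \<and> a p \<in> X)}"
definition dq :: "'p set \<Rightarrow> ('p \<Rightarrow> 'n) \<Rightarrow> ('p \<Rightarrow> 'n) \<Rightarrow> 'n set \<Rightarrow> 'n \<Rightarrow> nat" where
  "dq P a b Q x = card {p\<in>P. a p = x \<and> b p \<in> Q} + card {p\<in>P. b p = x \<and> a p \<in> Q}"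

lemma eg_insert:
  assumes "finite P" "y \<notin> X"
  shows "eg P a b X + card (crs P a b y X) \<le> eg P a b (insert y X)"
proof -
  have "card ({p\<in>P. a p \<in> X \<and> b p \<in> X} \<union> crs P a b y X) = eg P a b X + card (crs P a b y X)"
    unfolding eg_def using assms by (subst card_Un_disjoint) (auto simp: crs_def)
  moreover have "card ({p\<in>P. a p \<in> X \<and> b p \<in> X} \<union> crs P a b y X) \<le> eg P a b (insert y X)"
    unfolding eg_def using assms by (intro card_mono) (auto simp: crs_def)
  ultimately show ?thesis by simp
qed

lemma incg_insert:
  assumes "finite P"
  shows "incg P a b N (insert y X) \<le> incg P a b N X + dgg P a b y"
proof -
  have "{p\<in>P. a p \<in> N \<and> b p \<in> N \<and> (a p \<in> insert y X \<or> b p \<in> insert y X)} \<subseteq>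
        {p\<in>P. a p \<in> N \<and> b p \<in> N \<and> (a p \<in> X \<or> b p \<in> X)} \<union> {p\<in>P. a p = y \<or> b p = y}" by auto
  then have "incg P a b N (insert y X) \<le> card ({p\<in>P. a p \<in> N \<and> b p \<in> N \<and> (a p \<in> X \<or> b p \<in> X)} \<union> {p\<in>P. a p = y \<or> b p = y})"
    unfolding incg_def using assms by (intro card_mono) auto
  also have "\<dots> \<le> incg P a b N X + dgg P a b y" unfolding incg_def dgg_def by (rule card_Un_le)
  finally show ?thesis .
qed

lemma incg_single: "finite P \<Longrightarrow> incg P a b N {y} \<le> dgg P a b y"
  unfolding incg_def dgg_def by (intro card_mono) auto

lemma eg_split:
  assumes "finite P" "Q \<subseteq> N"
  shows "eg P a b N = eg P a b (N - Q) + incg P a b N Q"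
proof -
  have "{p\<in>P. a p \<in> N \<and> b p \<in> N} = {p\<in>P. a p \<in> N - Q \<and> b p \<in> N - Q} \<union> {p\<in>P. a p \<in> N \<and> b p \<in> N \<and> (a p \<in> Q \<or> b p \<in> Q)}"
    by auto
  then show ?thesis unfolding eg_def incg_def using assms by (simp add: card_Un_disjoint disjoint_iff)
qed

lemma good_inc:
  assumes finP: "finite P" and finN: "finite N" and XN: "X \<subseteq> N"
    and e: "eg P a b X + 1 = card X" and g: "\<forall>y\<in>N - X. card (crs P a b y X) \<le> 1"
  shows "incg P a b N X \<le> 2 * card N"
proof -
  define Cr where "Cr = {p\<in>P. a p \<in> N \<and> b p \<in> N \<and> ((a p \<in> X \<and> b p \<notin> X) \<or> (b p \<in> X \<and> a p \<notin> X))}"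
  define f where "f p = (if a p \<in> X then b p else a p)" for p
  have "inj_on f Cr"
  proof (rule inj_onI)
    fix p q assume p: "p \<in> Cr" and q: "q \<in> Cr" and fpq: "f p = f q"
    show "p = q"
    proof (rule ccontr)
      assume pq: "p \<noteq> q"
      let ?y = "f p"
      have yN: "?y \<in> N - X" using p unfolding Cr_def f_def by auto
      have "p \<in> crs P a b ?y X" "q \<in> crs P a b ?y X" using p q fpq unfolding Cr_def f_def crs_def
        by (auto split: if_splits)
      then have "card {p, q} \<le> card (crs P a b ?y X)"
        using finP by (intro card_mono) (auto simp: crs_def)
      moreover have "card (crs P a b ?y X) \<le> 1" using g yN by auto
      moreover have "card {p, q} = 2" using pq by simp
      ultimately show False by linarith
    qed
  qed
  moreover have "f ` Cr \<subseteq> N - X" unfolding Cr_def f_def by auto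
  ultimately have c1: "card Cr \<le> card (N - X)"
    using finN by (metis card_inj_on_le finite_Diff)
  have "{p\<in>P. a p \<in> N \<and> b p \<in> N \<and> (a p \<in> X \<or> b p \<in> X)} \<subseteq> {p\<in>P. a p \<in> X \<and> b p \<in> X} \<union> Cr"
    using XN unfolding Cr_def by auto
  then have "incg P a b N X \<le> card ({p\<in>P. a p \<in> X \<and> b p \<in> X} \<union> Cr)"
    unfolding incg_def using finP Cr_def by (intro card_mono) auto
  also have "\<dots> \<le> eg P a b X + card Cr" unfolding eg_def by (rule card_Un_le)
  also have "\<dots> \<le> card X + card (N - X)" using c1 e by simp
  also have "\<dots> \<le> 2 * card N" using XN finN card_mono[OF finN, of X] by (simp add: card_Diff_subset finite_subset)
  finally show ?thesis .
qed

lemma growth: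
  assumes finP: "finite P" and dgD: "\<forall>x\<in>N. dgg P a b x \<le> D"
    and finN: "finite N" and lt: "card N < eg P a b N"
  shows "\<exists>Q\<subseteq>N. Q \<noteq> {} \<and> card Q \<le> eg P a b Q \<and> incg P a b N Q \<le> 2 * card N + 2 * D"
  using dgD finN lt
proof (induction "card N" arbitrary: N rule: less_induct)
  case less
  note dgD = less.prems(1) and finN = less.prems(2) and lt = less.prems(3)
  have "N \<noteq> {}" using lt unfolding eg_def by auto
  then obtain x where xN: "x \<in> N" by auto
  show ?case
  proof (cases "\<exists>p\<in>P. a p = x \<and> b p = x")
    case True
    then obtain p where "p \<in> P" "a p = x" "b p = x" by auto
    then have "1 \<le> eg P a b {x}" unfolding eg_def using finP
      by (metis (mono_tags, lifting) One_nat_def Suc_leI card_gt_0_iff empty_iff finite_subset mem_Collect_eq singletonI subsetI)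
    moreover have "incg P a b N {x} \<le> D" using incg_single[OF finP, of a b N x] dgD xN by (meson order_trans)
    ultimately show ?thesis using xN by (intro exI[of _ "{x}"]) auto
  next
    case noloop: False
    show ?thesis
    proof (cases "\<exists>y\<in>N - {x}. 2 \<le> card (crs P a b y {x})")
      case True
      then obtain y where yN: "y \<in> N" "y \<noteq> x" and c2: "2 \<le> card (crs P a b y {x})" by auto
      have "eg P a b {x} + card (crs P a b y {x}) \<le> eg P a b (insert y {x})"
        using eg_insert[OF finP, of y "{x}" a b] yN by simp
      then have "card {y, x} \<le> eg P a b {y, x}" using c2 yN by simp
      moreover have "incg P a b N {y, x} \<le> 2 * card N + 2 * D"
      proof -
        have "dgg P a b x \<le> D" "dgg P a b y \<le> D" using dgD xN yN by auto
        then show ?thesis using incg_insert[OF finP, of a b N y "{x}"] incg_single[OF finP, of a b N x] by simp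
      qed
      ultimately show ?thesis using xN yN by (intro exI[of _ "{y, x}"]) auto
    next
      case noparal: False
      define good where "good X \<longleftrightarrow> X \<subseteq> N \<and> X \<noteq> {} \<and> eg P a b X + 1 = card X \<and>
          (\<forall>y\<in>N - X. card (crs P a b y X) \<le> 1)" for X
      have e0: "eg P a b {x} = 0" using noloop unfolding eg_def by (auto simp: card_eq_0_iff)
      have np: "\<forall>y\<in>N - {x}. card (crs P a b y {x}) \<le> 1"
      proof
        fix y assume "y \<in> N - {x}"
        then have "\<not> 2 \<le> card (crs P a b y {x})" using noparal by blast
        then show "card (crs P a b y {x}) \<le> 1" by simp
      qed
      have "good {x}" unfolding good_def using xN e0 np by simp
      have finG: "finite {X. good X}"
      proof (rule finite_subset[of _ "Pow N"])
        show "{X. good X} \<subseteq> Pow N" unfolding good_def by auto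
        show "finite (Pow N)" using finN by simp
      qed
      obtain X where gX: "good X" and mx: "\<forall>Z. good Z \<longrightarrow> card Z \<le> card X"
      proof -
        have "{X. good X} \<noteq> {}" using \<open>good {x}\<close> by auto
        then have "Max (card ` {X. good X}) \<in> card ` {X. good X}" using finG by (intro Max_in) auto
        then obtain X where gX: "good X" and cX: "card X = Max (card ` {X. good X})" by auto
        have "\<forall>Z. good Z \<longrightarrow> card Z \<le> card X"
        proof (intro allI impI)
          fix Z assume "good Z"
          then show "card Z \<le> card X" unfolding cX using finG by (intro Max_ge) auto
        qed
        then show ?thesis using that gX by blast
      qed
      have XN: "X \<subseteq> N" and eX: "eg P a b X + 1 = card X" and gX2: "\<forall>y\<in>N - X. card (crs P a b y X) \<le> 1"
        and Xne: "X \<noteq> {}" using gX unfolding good_def by auto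
      have finX: "finite X" using XN finN finite_subset by auto
      have incX: "incg P a b N X \<le> 2 * card N" using good_inc[OF finP finN XN eX gX2] .
      show ?thesis
      proof (cases "\<exists>y\<in>N - X. crs P a b y X \<noteq> {}")
        case True
        then obtain y where yN: "y \<in> N" "y \<notin> X" and cy: "crs P a b y X \<noteq> {}" by auto
        have "card (crs P a b y X) \<ge> 1" using cy finP unfolding crs_def
          by (simp add: Suc_leI card_gt_0_iff)
        then have e1: "card X \<le> eg P a b (insert y X)" using eg_insert[OF finP yN(2), of a b] eX by simp
        have cyX: "card (insert y X) = Suc (card X)" using finX yN by simp
        have incy: "incg P a b N (insert y X) \<le> 2 * card N + D"
        proof -
          have "dgg P a b y \<le> D" using dgD yN by auto
          then show ?thesis using incg_insert[OF finP, of a b N y X] incX by linarith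
        qed
        show ?thesis
        proof (cases "card (insert y X) \<le> eg P a b (insert y X)")
          case True
          then show ?thesis using incy yN XN by (intro exI[of _ "insert y X"]) auto
        next
          case False
          then have e2: "eg P a b (insert y X) + 1 = card (insert y X)" using e1 cyX by simp
          have ng: "\<not> good (insert y X)"
          proof
            assume "good (insert y X)"
            then have "card (insert y X) \<le> card X" using mx by blast
            then show False using cyX by simp
          qed
          have "\<not> (\<forall>z\<in>N - insert y X. card (crs P a b z (insert y X)) \<le> 1)"
          proof
            assume "\<forall>z\<in>N - insert y X. card (crs P a b z (insert y X)) \<le> 1"
            moreover have "insert y X \<subseteq> N" using yN XN by simp
            ultimately have "good (insert y X)" unfolding good_def using e2 by simp
            then show False using ng by simp
          qed
          then obtain z where zN0: "z \<in> N - insert y X" and cz0: "\<not> card (crs P a b z (insert y X)) \<le> 1"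
            by blast
          have zN: "z \<in> N" "z \<notin> insert y X" using zN0 by auto
          have cz: "2 \<le> card (crs P a b z (insert y X))" using cz0 by simp
          have e3: "card (insert z (insert y X)) \<le> eg P a b (insert z (insert y X))"
            using eg_insert[OF finP zN(2), of a b] e2 cz finX zN by simp
          have "incg P a b N (insert z (insert y X)) \<le> 2 * card N + 2 * D"
          proof -
            have "dgg P a b z \<le> D" using dgD zN by auto
            then show ?thesis using incg_insert[OF finP, of a b N z "insert y X"] incy by linarith
          qed
          then show ?thesis using e3 zN yN XN by (intro exI[of _ "insert z (insert y X)"]) auto
        qed
      next
        case False
        then have nocr: "\<forall>y\<in>N - X. crs P a b y X = {}" by auto
        define N' where "N' = N - X"
        have esp: "eg P a b N = eg P a b N' + incg P a b N X" using eg_split[OF finP XN] N'_def by simp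
        have "incg P a b N X = eg P a b X"
        proof -
          have "{p\<in>P. a p \<in> N \<and> b p \<in> N \<and> (a p \<in> X \<or> b p \<in> X)} = {p\<in>P. a p \<in> X \<and> b p \<in> X}"
          proof (rule set_eqI, rule iffI)
            fix p assume p: "p \<in> {p\<in>P. a p \<in> N \<and> b p \<in> N \<and> (a p \<in> X \<or> b p \<in> X)}"
            show "p \<in> {p\<in>P. a p \<in> X \<and> b p \<in> X}"
            proof (rule ccontr)
              assume "p \<notin> {p\<in>P. a p \<in> X \<and> b p \<in> X}"
              then have "(a p \<in> X \<and> b p \<in> N - X) \<or> (b p \<in> X \<and> a p \<in> N - X)" using p by auto
              then show False
              proof
                assume h: "a p \<in> X \<and> b p \<in> N - X"
                then have "p \<in> crs P a b (b p) X" using p unfolding crs_def by auto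
                then show False using nocr h by auto
              next
                assume h: "b p \<in> X \<and> a p \<in> N - X"
                then have "p \<in> crs P a b (a p) X" using p unfolding crs_def by auto
                then show False using nocr h by auto
              qed
            qed
          qed (use XN in auto)
          then show ?thesis unfolding incg_def eg_def by simp
        qed
        then have esp2: "eg P a b N = eg P a b N' + card X - 1" using esp eX by simp
        have cN': "card N' = card N - card X" using N'_def finX XN by (simp add: card_Diff_subset)
        have cXle: "card X \<le> card N" using XN finN card_mono by auto
        have lt': "card N' < eg P a b N'" using lt esp2 cN' cXle eX by linarith
        have "card X > 0" using Xne finX by (simp add: card_gt_0_iff)
        then have cNlt: "card N' < card N" using cN' cXle by linarith
        obtain Q where QN: "Q \<subseteq> N'" and Qne: "Q \<noteq> {}" and Qe: "card Q \<le> eg P a b Q"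
          and Qi: "incg P a b N' Q \<le> 2 * card N' + 2 * D"
          using less.hyps[OF cNlt] dgD lt' finN N'_def by auto
        have "incg P a b N Q = incg P a b N' Q"
        proof -
          have "{p\<in>P. a p \<in> N \<and> b p \<in> N \<and> (a p \<in> Q \<or> b p \<in> Q)} = {p\<in>P. a p \<in> N' \<and> b p \<in> N' \<and> (a p \<in> Q \<or> b p \<in> Q)}"
          proof (rule set_eqI, rule iffI)
            fix p assume p: "p \<in> {p\<in>P. a p \<in> N \<and> b p \<in> N \<and> (a p \<in> Q \<or> b p \<in> Q)}"
            show "p \<in> {p\<in>P. a p \<in> N' \<and> b p \<in> N' \<and> (a p \<in> Q \<or> b p \<in> Q)}"
            proof (rule ccontr)
              assume "p \<notin> {p\<in>P. a p \<in> N' \<and> b p \<in> N' \<and> (a p \<in> Q \<or> b p \<in> Q)}"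
              then have "(a p \<in> X \<and> b p \<in> N - X) \<or> (b p \<in> X \<and> a p \<in> N - X)" using p QN N'_def by auto
              then show False
              proof
                assume h: "a p \<in> X \<and> b p \<in> N - X"
                then have "p \<in> crs P a b (b p) X" using p unfolding crs_def by auto
                then show False using nocr h by auto
              next
                assume h: "b p \<in> X \<and> a p \<in> N - X"
                then have "p \<in> crs P a b (a p) X" using p unfolding crs_def by auto
                then show False using nocr h by auto
              qed
            qed
          qed (use N'_def in auto)
          then show ?thesis unfolding incg_def by simp
        qed
        moreover have "card N' \<le> card N" using cNlt by simp
        ultimately have "incg P a b N Q \<le> 2 * card N + 2 * D" using Qi by linarith
        then show ?thesis using QN N'_def Qne Qe by (intro exI[of _ Q]) auto
      qed
    qed
  qed
qed

lemma pieces: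
  assumes finP: "finite P" and dgD: "\<forall>x\<in>N0. dgg P a b x \<le> D" and fin0: "finite N0"
  shows "finite N \<Longrightarrow> N \<subseteq> N0 \<Longrightarrow> card N + j * (2 * card N0 + 2 * D) < eg P a b N \<Longrightarrow>
    \<exists>Qs. (\<forall>i\<le>j. Qs i \<subseteq> N \<and> Qs i \<noteq> {} \<and> card (Qs i) \<le> eg P a b (Qs i)) \<and>
         (\<forall>i\<le>j. \<forall>i'\<le>j. i \<noteq> i' \<longrightarrow> Qs i \<inter> Qs i' = {})"
proof (induction j arbitrary: N)
  case 0
  then obtain Q where "Q \<subseteq> N" "Q \<noteq> {}" "card Q \<le> eg P a b Q"
    using growth[OF finP, of N a b D] dgD by auto
  then show ?case by (intro exI[of _ "\<lambda>_. Q"]) auto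
next
  case (Suc j)
  let ?T = "2 * card N0 + 2 * D"
  have lt: "card N < eg P a b N" using Suc.prems by simp
  have dN: "\<forall>x\<in>N. dgg P a b x \<le> D" using dgD Suc.prems(2) by auto
  obtain Q where QN: "Q \<subseteq> N" and Qne: "Q \<noteq> {}" and Qe: "card Q \<le> eg P a b Q"
    and Qi: "incg P a b N Q \<le> 2 * card N + 2 * D"
    using growth[OF finP dN Suc.prems(1) lt] by auto
  have "card N \<le> card N0" using Suc.prems(1,2) fin0 by (meson card_mono)
  then have Qi2: "incg P a b N Q \<le> ?T" using Qi by linarith
  have esp: "eg P a b N = eg P a b (N - Q) + incg P a b N Q" using eg_split[OF finP QN] .
  have "card (N - Q) \<le> card N" using Suc.prems(1) by (simp add: card_mono)
  then have c1: "card (N - Q) + j * ?T < eg P a b (N - Q)" using Suc.prems(3) esp Qi2 by simp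
  have c2: "N - Q \<subseteq> N0" "finite (N - Q)" using Suc.prems(1,2) by auto
  obtain Qs where H1: "\<forall>i\<le>j. Qs i \<subseteq> N - Q \<and> Qs i \<noteq> {} \<and> card (Qs i) \<le> eg P a b (Qs i)"
    and H2: "\<forall>i\<le>j. \<forall>i'\<le>j. i \<noteq> i' \<longrightarrow> Qs i \<inter> Qs i' = {}"
    using Suc.IH[OF c2(2) c2(1) c1] by (elim exE conjE)
  define Qs' where "Qs' = Qs(Suc j := Q)"
  have "\<forall>i\<le>Suc j. Qs' i \<subseteq> N \<and> Qs' i \<noteq> {} \<and> card (Qs' i) \<le> eg P a b (Qs' i)"
    using H1 QN Qne Qe unfolding Qs'_def by (auto simp: le_Suc_eq)
  moreover have "\<forall>i\<le>Suc j. \<forall>i'\<le>Suc j. i \<noteq> i' \<longrightarrow> Qs' i \<inter> Qs' i' = {}"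
    using H1 H2 unfolding Qs'_def by (auto simp: le_Suc_eq)
  ultimately show ?case by blast
qed

lemma core:
  assumes finP: "finite P"
  shows "finite Q \<Longrightarrow> Q \<noteq> {} \<Longrightarrow> card Q \<le> eg P a b Q \<Longrightarrow>
    \<exists>Q'\<subseteq>Q. Q' \<noteq> {} \<and> (\<forall>x\<in>Q'. 2 \<le> dq P a b Q' x)"
proof (induction "card Q" arbitrary: Q rule: less_induct)
  case less
  show ?case
  proof (cases "\<forall>x\<in>Q. 2 \<le> dq P a b Q x")
    case True then show ?thesis using less.prems by auto
  next
    case False
    then obtain x where xQ: "x \<in> Q" and dx: "dq P a b Q x \<le> 1" by auto
    let ?A = "{p\<in>P. a p = x \<and> b p \<in> Q}" and ?B = "{p\<in>P. b p = x \<and> a p \<in> Q}"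
    have "{p\<in>P. a p \<in> Q \<and> b p \<in> Q} \<subseteq> {p\<in>P. a p \<in> Q - {x} \<and> b p \<in> Q - {x}} \<union> (?A \<union> ?B)" by auto
    then have "eg P a b Q \<le> card ({p\<in>P. a p \<in> Q - {x} \<and> b p \<in> Q - {x}} \<union> (?A \<union> ?B))"
      unfolding eg_def using finP by (intro card_mono) auto
    also have "\<dots> \<le> eg P a b (Q - {x}) + (card ?A + card ?B)"
      unfolding eg_def by (meson add_le_mono card_Un_le le_trans order_refl)
    finally have e1: "eg P a b Q \<le> eg P a b (Q - {x}) + 1" using dx unfolding dq_def by simp
    have cQ: "card (Q - {x}) = card Q - 1" using xQ less.prems(1) by simp
    have ne: "Q - {x} \<noteq> {}"
    proof
      assume "Q - {x} = {}"
      then have Qx: "Q = {x}" using xQ by auto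
      then have "1 \<le> eg P a b Q" using less.prems(3) by simp
      then obtain p where p: "p \<in> P" "a p = x" "b p = x" unfolding eg_def using Qx
        by (metis (mono_tags, lifting) Collect_empty_eq card.empty not_one_le_zero singletonD)
      then have "p \<in> ?A" "p \<in> ?B" using Qx by auto
      then have "card ?A \<ge> 1" "card ?B \<ge> 1" using finP
        by (metis (no_types, lifting) One_nat_def Suc_leI card_gt_0_iff empty_iff finite_subset mem_Collect_eq subsetI)+
      then show False using dx unfolding dq_def by simp
    qed
    have "card (Q - {x}) < card Q" using xQ less.prems(1) by (meson card_Diff1_less)
    moreover have "card (Q - {x}) \<le> eg P a b (Q - {x})" using e1 cQ less.prems(3) by simp
    ultimately obtain Q' where "Q' \<subseteq> Q - {x}" "Q' \<noteq> {}" "\<forall>x\<in>Q'. 2 \<le> dq P a b Q' x"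
      using less.hyps[of "Q - {x}"] less.prems(1) ne by auto
    then show ?thesis by auto
  qed
qed



locale hs =
  fixes V :: "'a set" and E :: "'a \<Rightarrow> 'a \<Rightarrow> bool" and L R S :: "'a set"
    and P :: "'a list set" and Sg :: "('a \<times> 'a list list) set"
  assumes G: "graph V E" and VLR: "V = L \<union> R" and SLR: "S = L \<inter> R"
    and LS: "\<forall>x\<in>L - S. \<forall>y\<in>R - S. \<not> E x y"
    and P1: "\<forall>xs\<in>P. 2 \<le> length xs \<and> induced_path E xs"
    and P2: "L = (\<Union>xs\<in>P. set xs)"
    and P3: "\<forall>xs\<in>P. \<forall>ys\<in>P. xs \<noteq> ys \<longrightarrow> set xs \<inter> set ys = {} \<and> (\<forall>x\<in>set xs. \<forall>y\<in>set ys. \<not> E x y)"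
    and P4: "S = (\<Union>xs\<in>P. {hd xs, last xs})"
    and SD: "stars_decomp E R S Sg"
begin

lemma finV: "finite V" using G unfolding graph_def by simp
lemma Esym: "E x y \<Longrightarrow> E y x" using G unfolding graph_def by blast
lemma Eirr: "\<not> E x x" using G unfolding graph_def by blast
lemma EV: "E x y \<Longrightarrow> x \<in> V \<and> y \<in> V" using G unfolding graph_def by blast
lemma finL: "finite L" and finR: "finite R" using finV VLR by auto

abbreviation sv :: "'a \<times> 'a list list \<Rightarrow> 'a set" where "sv \<sigma> \<equiv> star_verts (fst \<sigma>) (snd \<sigma>)"

lemma SD1: "(c, legs) \<in> Sg \<Longrightarrow> induced_sstar E c legs" using SD unfolding stars_decomp_def by blast
lemma SD2: "R = (\<Union>\<sigma>\<in>Sg. sv \<sigma>)" using SD unfolding stars_decomp_def by (auto simp: case_prod_beta)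
lemma SD3: "\<sigma>1 \<in> Sg \<Longrightarrow> \<sigma>2 \<in> Sg \<Longrightarrow> \<sigma>1 \<noteq> \<sigma>2 \<Longrightarrow> sv \<sigma>1 \<inter> sv \<sigma>2 = {} \<and> (\<forall>x\<in>sv \<sigma>1. \<forall>y\<in>sv \<sigma>2. \<not> E x y)"
proof -
  assume a: "\<sigma>1 \<in> Sg" "\<sigma>2 \<in> Sg" "\<sigma>1 \<noteq> \<sigma>2"
  have "\<forall>(c, legs) \<in> Sg. \<forall>(d, legs') \<in> Sg. (c, legs) \<noteq> (d, legs') \<longrightarrow>
          star_verts c legs \<inter> star_verts d legs' = {} \<and>
          (\<forall>x \<in> star_verts c legs. \<forall>y \<in> star_verts d legs'. \<not> E x y)"
    using SD unfolding stars_decomp_def by blast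
  then have "\<forall>s1 \<in> Sg. \<forall>s2 \<in> Sg. s1 \<noteq> s2 \<longrightarrow> sv s1 \<inter> sv s2 = {} \<and> (\<forall>x\<in>sv s1. \<forall>y\<in>sv s2. \<not> E x y)"
    by (simp add: case_prod_beta prod_eq_iff)
  then show ?thesis using a by blast
qed
lemma SD4: "S = (\<Union>\<sigma>\<in>Sg. star_leaves (snd \<sigma>))" using SD unfolding stars_decomp_def by (auto simp: case_prod_beta)

lemma sv_R: "\<sigma> \<in> Sg \<Longrightarrow> sv \<sigma> \<subseteq> R" using SD2 by auto

lemma sv_uniq: "\<sigma>1 \<in> Sg \<Longrightarrow> \<sigma>2 \<in> Sg \<Longrightarrow> x \<in> sv \<sigma>1 \<Longrightarrow> x \<in> sv \<sigma>2 \<Longrightarrow> \<sigma>1 = \<sigma>2"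
  using SD3 by blast

lemma st_legsv: "l \<in> set legs \<Longrightarrow> set l \<subseteq> star_verts c legs" unfolding star_verts_def by auto
lemma st_csv: "c \<in> star_verts c legs" unfolding star_verts_def by auto

context
  fixes c legs assumes cS: "(c, legs) \<in> Sg"
begin
lemma st_ind: "induced_sstar E c legs" using SD1[OF cS] .
lemma st_ne: "l \<in> set legs \<Longrightarrow> l \<noteq> []" using st_ind unfolding induced_sstar_def by blast
lemma st_dist: "distinct (c # concat legs)" using st_ind unfolding induced_sstar_def by blast
lemma st_cnot: "l \<in> set legs \<Longrightarrow> c \<notin> set l" using st_dist by auto
lemma st_dl: "l \<in> set legs \<Longrightarrow> distinct l" using st_dist by (auto simp: distinct_concat_iff)
lemma st_dcl: "l \<in> set legs \<Longrightarrow> distinct (c # l)" using st_dl st_cnot by simp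
lemma st_disj: "l1 \<in> set legs \<Longrightarrow> l2 \<in> set legs \<Longrightarrow> l1 \<noteq> l2 \<Longrightarrow> set l1 \<inter> set l2 = {}"
  using st_dist by (auto simp: distinct_concat_iff)
lemma st_E: "x \<in> star_verts c legs \<Longrightarrow> y \<in> star_verts c legs \<Longrightarrow> E x y \<longleftrightarrow> star_edge c legs x y"
  using st_ind unfolding induced_sstar_def by blast
lemma leg_edge: assumes l: "l \<in> set legs" and j: "j < length l"
  shows "E ((c#l)!j) (l!j)"
proof -
  have "(c#l)!j \<in> star_verts c legs"
  proof (cases j)
    case 0 then show ?thesis using st_csv by simp
  next
    case (Suc i) then show ?thesis using j by (auto intro!: subsetD[OF st_legsv[OF l]])
  qed
  moreover have "l!j \<in> star_verts c legs" using j by (auto intro!: subsetD[OF st_legsv[OF l]])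
  moreover have "star_edge c legs ((c#l)!j) (l!j)" unfolding star_edge_def
    using l j by (intro bexI[of _ l] exI[of _ j]) auto
  ultimately show ?thesis using st_E by blast
qed
lemma leg_edge2: assumes l: "l \<in> set legs" and j: "Suc j < length l"
  shows "E (l!j) (l!Suc j)"
  using leg_edge[OF l j] by simp
lemma inj_last: "inj_on last (set legs)"
proof (rule inj_onI)
  fix l1 l2 assume "l1 \<in> set legs" "l2 \<in> set legs" "last l1 = last l2"
  then show "l1 = l2" using st_disj st_ne by (metis disjoint_iff last_in_set)
qed
lemma inj_hd: "inj_on hd (set legs)"
proof (rule inj_onI)
  fix l1 l2 assume "l1 \<in> set legs" "l2 \<in> set legs" "hd l1 = hd l2"
  then show "l1 = l2" using st_disj st_ne by (metis disjoint_iff hd_in_set)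
qed
lemma leaves_sv: "star_leaves legs \<subseteq> star_verts c legs"
  unfolding star_leaves_def star_verts_def using st_ne by auto
end

definition st :: "'a \<Rightarrow> 'a \<times> 'a list list" where
  "st s = (SOME \<sigma>. \<sigma> \<in> Sg \<and> s \<in> star_leaves (snd \<sigma>))"

lemma st_ok: "s \<in> S \<Longrightarrow> st s \<in> Sg \<and> s \<in> star_leaves (snd (st s))"
proof -
  assume "s \<in> S"
  then have "\<exists>\<sigma>. \<sigma> \<in> Sg \<and> s \<in> star_leaves (snd \<sigma>)" using SD4 by blast
  then show ?thesis unfolding st_def by (rule someI_ex)
qed

lemma st_eq: assumes "\<sigma> \<in> Sg" "s \<in> sv \<sigma>" "s \<in> S" shows "st s = \<sigma>"
proof -
  have "st s \<in> Sg" "s \<in> star_leaves (snd (st s))" using st_ok assms(3) by auto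
  then have "s \<in> sv (st s)" using leaves_sv[of "fst (st s)" "snd (st s)"] by auto
  then show ?thesis using sv_uniq assms \<open>st s \<in> Sg\<close> by blast
qed

lemma leafleg: assumes cS: "(c, legs) \<in> Sg" and l: "l \<in> set legs" and x: "x \<in> set l" and xS: "x \<in> S"
  shows "x = last l"
proof -
  have "x \<in> sv (c, legs)" using st_legsv[OF l] x by auto
  then have "st x = (c, legs)" using st_eq cS xS by blast
  then have "x \<in> last ` set legs" using st_ok[OF xS] unfolding star_leaves_def by simp
  then obtain l' where l': "l' \<in> set legs" "x = last l'" by auto
  then have "x \<in> set l'" using st_ne[OF cS] by auto
  then have "l = l'" using st_disj[OF cS l l'(1)] x by auto
  then show ?thesis using l' by simp
qed

lemma center_notS: assumes cS: "(c, legs) \<in> Sg" shows "c \<notin> S"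
proof
  assume cs: "c \<in> S"
  have "c \<in> sv (c, legs)" using st_csv by simp
  then have "st c = (c, legs)" using st_eq cS cs by blast
  then have "c \<in> last ` set legs" using st_ok[OF cs] unfolding star_leaves_def by simp
  then obtain l where "l \<in> set legs" "c = last l" by auto
  then show False using st_cnot[OF cS] st_ne[OF cS] by (metis last_in_set)
qed

lemma p_len: "p \<in> P \<Longrightarrow> 2 \<le> length p" using P1 by blast
lemma p_ind: "p \<in> P \<Longrightarrow> induced_path E p" using P1 by blast
lemma p_dist: "p \<in> P \<Longrightarrow> distinct p" using p_ind unfolding induced_path_def by blast
lemma p_E: "p \<in> P \<Longrightarrow> i < length p \<Longrightarrow> j < length p \<Longrightarrow> E (p!i) (p!j) \<longleftrightarrow> (i + 1 = j \<or> j + 1 = i)"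
  using p_ind unfolding induced_path_def by blast
lemma p_L: "p \<in> P \<Longrightarrow> set p \<subseteq> L" using P2 by auto
lemma p_uniq: "p \<in> P \<Longrightarrow> q \<in> P \<Longrightarrow> x \<in> set p \<Longrightarrow> x \<in> set q \<Longrightarrow> p = q" using P3 by blast
lemma p_ne: "p \<in> P \<Longrightarrow> p \<noteq> []" using p_len by fastforce
lemma p_hl: assumes "p \<in> P" shows "hd p \<noteq> last p"
proof -
  have "hd p = p!0" "last p = p!(length p - 1)" using p_ne[OF assms] by (auto simp: hd_conv_nth last_conv_nth)
  moreover have "0 \<noteq> length p - 1" using p_len[OF assms] by simp
  moreover have "0 < length p" "length p - 1 < length p" using p_len[OF assms] by auto
  ultimately show ?thesis using p_dist[OF assms] by (simp add: nth_eq_iff_index_eq)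
qed
lemma p_hdS: "p \<in> P \<Longrightarrow> hd p \<in> S" using P4 by auto
lemma p_lastS: "p \<in> P \<Longrightarrow> last p \<in> S" using P4 by auto
lemma pS: assumes "p \<in> P" "x \<in> set p" "x \<in> S" shows "x = hd p \<or> x = last p"
proof -
  obtain q where q: "q \<in> P" "x = hd q \<or> x = last q" using assms(3) P4 by auto
  then have "x \<in> set q" using p_ne[OF q(1)] by auto
  then have "q = p" using p_uniq q(1) assms by blast
  then show ?thesis using q by simp
qed

lemma finP: "finite P"
proof -
  have "inj_on set P"
  proof (rule inj_onI)
    fix p q assume "p \<in> P" "q \<in> P" "set p = set q"
    moreover have "hd p \<in> set p" using p_ne \<open>p \<in> P\<close> by simp
    ultimately show "p = q" using p_uniq by auto
  qed
  moreover have "set ` P \<subseteq> Pow L" using p_L by auto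
  then have "finite (set ` P)" using finL by (meson finite_Pow_iff finite_subset)
  ultimately show ?thesis using finite_imageD by blast
qed

lemma finSg: "finite Sg"
proof -
  have "inj_on sv Sg"
  proof (rule inj_onI)
    fix s1 s2 assume "s1 \<in> Sg" "s2 \<in> Sg" "sv s1 = sv s2"
    moreover have "fst s1 \<in> sv s1" by (rule st_csv)
    ultimately show "s1 = s2" using sv_uniq by auto
  qed
  moreover have "sv ` Sg \<subseteq> Pow R" using sv_R by auto
  then have "finite (sv ` Sg)" using finR by (meson finite_Pow_iff finite_subset)
  ultimately show ?thesis using finite_imageD by blast
qed

lemma EDGE: assumes e: "E x y"
  shows "(\<exists>\<sigma>\<in>Sg. x \<in> sv \<sigma> \<and> y \<in> sv \<sigma>) \<or> (\<exists>p\<in>P. x \<in> set p \<and> y \<in> set p)"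
proof -
  have xy: "x \<in> V" "y \<in> V" using EV[OF e] by auto
  show ?thesis
  proof (cases "x \<in> R \<and> y \<in> R")
    case True
    then obtain s1 s2 where s: "s1 \<in> Sg" "s2 \<in> Sg" "x \<in> sv s1" "y \<in> sv s2" using SD2 by auto
    then have "s1 = s2" using SD3 e by blast
    then show ?thesis using s by blast
  next
    case nR: False
    show ?thesis
    proof (cases "x \<in> L \<and> y \<in> L")
      case True
      then obtain p q where s: "p \<in> P" "q \<in> P" "x \<in> set p" "y \<in> set q" using P2 by auto
      then have "p = q" using P3 e by blast
      then show ?thesis using s by blast
    next
      case False
      then have "(x \<in> L - S \<and> y \<in> R - S) \<or> (y \<in> L - S \<and> x \<in> R - S)"
        using nR xy VLR SLR by blast
      moreover have "\<not> E x y" if "x \<in> L - S" "y \<in> R - S" using LS that by blast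
      moreover have "\<not> E y x" if "y \<in> L - S" "x \<in> R - S" using LS that by blast
      ultimately show ?thesis using e Esym by blast
    qed
  qed
qed


lemma two_elems: assumes "finite A" "2 \<le> card A" shows "\<exists>x\<in>A. \<exists>y\<in>A. x \<noteq> y"
proof (rule ccontr)
  assume "\<not> ?thesis"
  then have "card A \<le> Suc 0" using card_le_Suc0_iff_eq[OF assms(1)] by blast
  then show False using assms(2) by simp
qed

definition ea :: "'a list \<Rightarrow> 'a \<times> 'a list list" where "ea p = st (hd p)"
definition eb :: "'a list \<Rightarrow> 'a \<times> 'a list list" where "eb p = st (last p)"
definition FF :: "('a \<times> 'a list list) set \<Rightarrow> 'a list set" where
  "FF Q = {p\<in>P. ea p \<in> Q \<and> eb p \<in> Q}"
definition UU :: "('a \<times> 'a list list) set \<Rightarrow> 'a set" where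
  "UU Q = (\<Union>p\<in>FF Q. {hd p, last p})"
definition YY :: "('a \<times> 'a list list) set \<Rightarrow> 'a set" where
  "YY Q = fst ` Q \<union> (\<Union>\<sigma>\<in>Q. \<Union>l\<in>{l \<in> set (snd \<sigma>). last l \<in> UU Q}. set l) \<union> (\<Union>p\<in>FF Q. set p)"

lemma UU_S: "s \<in> UU Q \<Longrightarrow> s \<in> S" unfolding UU_def FF_def using p_hdS p_lastS by auto

lemma legY: "(c, legs) \<in> Q \<Longrightarrow> l \<in> set legs \<Longrightarrow> last l \<in> UU Q \<Longrightarrow> set l \<subseteq> YY Q"
  unfolding YY_def by force
lemma cY: "(c, legs) \<in> Q \<Longrightarrow> c \<in> YY Q" unfolding YY_def by force
lemma pY: "p \<in> FF Q \<Longrightarrow> set p \<subseteq> YY Q" unfolding YY_def by blast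

lemma usedleaf: assumes Q: "Q \<subseteq> Sg" and cQ: "(c, legs) \<in> Q" and s: "s \<in> UU Q" and sts: "st s = (c, legs)"
  shows "\<exists>l\<in>set legs. last l = s \<and> set l \<subseteq> YY Q"
proof -
  have "s \<in> star_leaves legs" using st_ok[OF UU_S[OF s]] sts by simp
  then obtain l where l: "l \<in> set legs" "last l = s" unfolding star_leaves_def by auto
  then show ?thesis using legY[OF cQ l(1)] s by auto
qed

lemma legchk: assumes Q: "Q \<subseteq> Sg" and cQ: "(c, legs) \<in> Q" and l: "l \<in> set legs"
    and lu: "last l \<in> UU Q" and j: "j < length l"
  shows "\<exists>u\<in>YY Q. \<exists>w\<in>YY Q. u \<noteq> w \<and> E (l!j) u \<and> E (l!j) w"
proof -
  have cS: "(c, legs) \<in> Sg" using Q cQ by auto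
  have lY: "set l \<subseteq> YY Q" using legY[OF cQ l lu] .
  define pr where "pr = (c#l)!j"
  have prY: "pr \<in> YY Q"
  proof (cases j)
    case 0 then show ?thesis using cY[OF cQ] pr_def by simp
  next
    case (Suc i) then show ?thesis using lY j pr_def by auto
  qed
  have E1: "E (l!j) pr" using Esym[OF leg_edge[OF cS l j]] pr_def by simp
  have prR: "pr \<in> R"
  proof -
    have "pr \<in> star_verts c legs"
    proof (cases j)
      case 0 then show ?thesis using st_csv pr_def by simp
    next
      case (Suc i) then show ?thesis using j pr_def by (auto intro!: subsetD[OF st_legsv[OF l]])
    qed
    then show ?thesis using sv_R[OF cS] by auto
  qed
  have prS: "pr \<notin> S"
  proof
    assume prs: "pr \<in> S"
    show False
    proof (cases j)
      case 0 then show False using center_notS[OF cS] prs pr_def by simp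
    next
      case (Suc i)
      then have "pr = l!i" "l!i \<in> set l" using pr_def j by auto
      then have "l!i = last l" using leafleg[OF cS l] prs by simp
      also have "last l = l!(length l - 1)" using st_ne[OF cS l] by (simp add: last_conv_nth)
      finally have "i = length l - 1" using st_dl[OF cS l] Suc j by (simp add: nth_eq_iff_index_eq)
      then show False using Suc j by simp
    qed
  qed
  show ?thesis
  proof (cases "Suc j < length l")
    case True
    define w where "w = l!Suc j"
    have wY: "w \<in> YY Q" using lY True w_def by auto
    have E2: "E (l!j) w" using leg_edge2[OF cS l True] w_def by simp
    have "pr \<noteq> w"
    proof -
      have d: "distinct (c#l)" using st_dcl[OF cS l] .
      have "((c#l)!j = (c#l)!Suc (Suc j)) = (j = Suc (Suc j))"
        by (rule nth_eq_iff_index_eq[OF d]) (use True in auto)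
      then have "(c#l)!j \<noteq> (c#l)!Suc (Suc j)" by simp
      then show ?thesis using pr_def w_def by simp
    qed
    then show ?thesis using prY wY E1 E2 by blast
  next
    case False
    then have "j = length l - 1" using j by simp
    then have lj: "l!j = last l" using st_ne[OF cS l] by (simp add: last_conv_nth)
    obtain p where pF: "p \<in> FF Q" and lp: "last l = hd p \<or> last l = last p"
      using lu unfolding UU_def by auto
    have pP: "p \<in> P" using pF unfolding FF_def by auto
    have lenp: "2 \<le> length p" using p_len[OF pP] .
    obtain w where wp: "w \<in> set p" and E2: "E (last l) w"
    proof (cases "last l = hd p")
      case True
      have "E (p!0) (p!1)" using p_E[OF pP, of 0 1] lenp p_ne[OF pP] by simp
      moreover have "hd p = p!0" using p_ne[OF pP] by (simp add: hd_conv_nth)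
      moreover have "p!1 \<in> set p" using lenp by simp
      ultimately show ?thesis using that True by simp
    next
      case False
      then have ll: "last l = last p" using lp by simp
      have "Suc (length p - 2) = length p - 1" using lenp by simp
      then have "E (p!(length p - 1)) (p!(length p - 2))" using p_E[OF pP, of "length p - 1" "length p - 2"] lenp by simp
      moreover have "last p = p!(length p - 1)" using p_ne[OF pP] by (simp add: last_conv_nth)
      moreover have "p!(length p - 2) \<in> set p" using lenp by simp
      ultimately show ?thesis using that ll by simp
    qed
    have wY: "w \<in> YY Q" using pY[OF pF] wp by auto
    have "w \<in> L" using p_L[OF pP] wp by auto
    then have "pr \<noteq> w" using prR prS SLR by auto
    then show ?thesis using prY wY E1 E2 lj by auto
  qed
qed

lemma hd_used: "p \<in> P \<Longrightarrow> p \<in> FF Q \<Longrightarrow> hd p \<in> UU Q" unfolding UU_def by auto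
lemma last_used: "p \<in> P \<Longrightarrow> p \<in> FF Q \<Longrightarrow> last p \<in> UU Q" unfolding UU_def by auto

lemma centchk: assumes Q: "Q \<subseteq> Sg" and cQ: "(c, legs) \<in> Q" and dq2: "2 \<le> dq P ea eb Q (c, legs)"
  shows "\<exists>u\<in>YY Q. \<exists>w\<in>YY Q. u \<noteq> w \<and> E c u \<and> E c w"
proof -
  let ?\<sigma> = "(c, legs)"
  have cS: "?\<sigma> \<in> Sg" using Q cQ by auto
  define A where "A = {p\<in>P. ea p = ?\<sigma> \<and> eb p \<in> Q}"
  define B where "B = {p\<in>P. eb p = ?\<sigma> \<and> ea p \<in> Q}"
  have cAB: "2 \<le> card A + card B" using dq2 unfolding dq_def A_def B_def by simp
  have finA: "finite A" "finite B" using finP unfolding A_def B_def by auto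
  have hA: "hd p \<in> UU Q \<and> st (hd p) = ?\<sigma>" if "p \<in> A" for p
    using that cQ unfolding A_def UU_def FF_def ea_def by auto
  have hB: "last p \<in> UU Q \<and> st (last p) = ?\<sigma>" if "p \<in> B" for p
    using that cQ unfolding B_def UU_def FF_def eb_def by auto
  have PA: "A \<subseteq> P" "B \<subseteq> P" unfolding A_def B_def by auto
  obtain s1 s2 where s12: "s1 \<noteq> s2" "s1 \<in> UU Q" "s2 \<in> UU Q" "st s1 = ?\<sigma>" "st s2 = ?\<sigma>"
  proof (cases "2 \<le> card A")
    case True
    then obtain p1 p2 where "p1 \<in> A" "p2 \<in> A" "p1 \<noteq> p2" using two_elems finA by blast
    moreover have "hd p1 \<noteq> hd p2"
    proof
      assume h: "hd p1 = hd p2"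
      have "p1 \<in> P" "p2 \<in> P" using \<open>p1 \<in> A\<close> \<open>p2 \<in> A\<close> PA by auto
      then have "hd p1 \<in> set p1" "hd p2 \<in> set p2" using p_ne by auto
      then show False using p_uniq[of p1 p2 "hd p1"] h \<open>p1 \<in> P\<close> \<open>p2 \<in> P\<close> \<open>p1 \<noteq> p2\<close> by auto
    qed
    ultimately show ?thesis using that hA by blast
  next
    case nA: False
    show ?thesis
    proof (cases "2 \<le> card B")
      case True
      then obtain p1 p2 where "p1 \<in> B" "p2 \<in> B" "p1 \<noteq> p2" using two_elems finA by blast
      moreover have "last p1 \<noteq> last p2"
      proof
        assume h: "last p1 = last p2"
        have "p1 \<in> P" "p2 \<in> P" using \<open>p1 \<in> B\<close> \<open>p2 \<in> B\<close> PA by auto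
        then have "last p1 \<in> set p1" "last p2 \<in> set p2" using p_ne by auto
        then show False using p_uniq[of p1 p2 "last p1"] h \<open>p1 \<in> P\<close> \<open>p2 \<in> P\<close> \<open>p1 \<noteq> p2\<close> by auto
      qed
      ultimately show ?thesis using that hB by blast
    next
      case False
      then have "card A \<noteq> 0" "card B \<noteq> 0" using nA cAB by auto
      then obtain p1 p2 where p12: "p1 \<in> A" "p2 \<in> B" by (metis all_not_in_conv card.empty)
      have "hd p1 \<noteq> last p2"
      proof
        assume h: "hd p1 = last p2"
        have "p1 \<in> P" "p2 \<in> P" using p12 PA by auto
        then have "hd p1 \<in> set p1" "last p2 \<in> set p2" using p_ne by auto
        then have "p1 = p2" using p_uniq[of p1 p2 "hd p1"] h \<open>p1 \<in> P\<close> \<open>p2 \<in> P\<close> by auto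
        then show False using h p_hl p12 PA by auto
      qed
      then show ?thesis using that hA[OF p12(1)] hB[OF p12(2)] by blast
    qed
  qed
  obtain l1 where l1: "l1 \<in> set legs" "last l1 = s1" "set l1 \<subseteq> YY Q" using usedleaf[OF Q cQ s12(2,4)] by blast
  obtain l2 where l2: "l2 \<in> set legs" "last l2 = s2" "set l2 \<subseteq> YY Q" using usedleaf[OF Q cQ s12(3,5)] by blast
  have "l1 \<noteq> l2" using l1 l2 s12 by auto
  then have hne: "hd l1 \<noteq> hd l2" using inj_hd[OF cS] l1 l2 by (meson inj_on_def)
  have Eh: "E c (hd l)" if "l \<in> set legs" for l
  proof -
    have "l \<noteq> []" using st_ne[OF cS that] .
    then show ?thesis using leg_edge[OF cS that, of 0] by (simp add: hd_conv_nth)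
  qed
  have "hd l1 \<in> YY Q" "hd l2 \<in> YY Q" using l1 l2 st_ne[OF cS] by (auto intro: hd_in_set)
  then show ?thesis using hne Eh l1 l2 by blast
qed

lemma pathchk: assumes Q: "Q \<subseteq> Sg" and pF: "p \<in> FF Q" and j: "j < length p"
  shows "\<exists>u\<in>YY Q. \<exists>w\<in>YY Q. u \<noteq> w \<and> E (p!j) u \<and> E (p!j) w"
proof -
  have pP: "p \<in> P" using pF unfolding FF_def by auto
  have lenp: "2 \<le> length p" using p_len[OF pP] .
  have leafcase: "\<exists>u\<in>YY Q. \<exists>w\<in>YY Q. u \<noteq> w \<and> E v u \<and> E v w" if vU: "v \<in> UU Q" and stv: "st v \<in> Q" for v
  proof -
    obtain c legs where cl: "st v = (c, legs)" by (cases "st v") auto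
    obtain l where l: "l \<in> set legs" "last l = v" "set l \<subseteq> YY Q" using usedleaf[OF Q _ vU cl] stv cl by auto
    have cS: "(c, legs) \<in> Sg" using Q stv cl by auto
    have "l!(length l - 1) = v" using l st_ne[OF cS l(1)] by (simp add: last_conv_nth)
    moreover have "length l - 1 < length l" using st_ne[OF cS l(1)] by simp
    ultimately show ?thesis using legchk[OF Q _ l(1), of c "length l - 1"] stv cl l vU by auto
  qed
  show ?thesis
  proof (cases "j = 0")
    case True
    then have "p!j = hd p" using p_ne[OF pP] by (simp add: hd_conv_nth)
    moreover have "hd p \<in> UU Q" using hd_used[OF pP pF] .
    moreover have "st (hd p) \<in> Q" using pF unfolding FF_def ea_def by auto
    ultimately show ?thesis using leafcase by simp
  next
    case nz: False
    show ?thesis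
    proof (cases "j = length p - 1")
      case True
      then have "p!j = last p" using p_ne[OF pP] by (simp add: last_conv_nth)
      moreover have "last p \<in> UU Q" using last_used[OF pP pF] .
      moreover have "st (last p) \<in> Q" using pF unfolding FF_def eb_def by auto
      ultimately show ?thesis using leafcase by simp
    next
      case False
      then have jj: "Suc j < length p" using j by simp
      have "E (p!j) (p!(j-1))" "E (p!j) (p!Suc j)" using p_E[OF pP] jj nz by auto
      moreover have "p!(j-1) \<noteq> p!Suc j" using p_dist[OF pP] jj by (simp add: nth_eq_iff_index_eq)
      moreover have "p!(j-1) \<in> YY Q" "p!Suc j \<in> YY Q" using pY[OF pF] jj by auto
      ultimately show ?thesis by blast
    qed
  qed
qed

lemma YYdeg: assumes Q: "Q \<subseteq> Sg" and core: "\<forall>x\<in>Q. 2 \<le> dq P ea eb Q x" and v: "v \<in> YY Q"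
  shows "\<exists>u\<in>YY Q. \<exists>w\<in>YY Q. u \<noteq> w \<and> E v u \<and> E v w"
proof -
  consider (c) "v \<in> fst ` Q" | (l) \<sigma> l where "\<sigma> \<in> Q" "l \<in> set (snd \<sigma>)" "last l \<in> UU Q" "v \<in> set l"
    | (p) p where "p \<in> FF Q" "v \<in> set p"
    using v unfolding YY_def by blast
  then show ?thesis
  proof cases
    case c
    then obtain c legs where "(c, legs) \<in> Q" "v = c" by force
    then show ?thesis using centchk[OF Q] core by blast
  next
    case (l \<sigma> l)
    obtain c legs where cl: "\<sigma> = (c, legs)" by (cases \<sigma>) auto
    obtain j where "j < length l" "v = l!j" using l(4) by (metis in_set_conv_nth)
    then show ?thesis using legchk[OF Q, of c legs l j] l cl by auto
  next
    case (p p)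
    obtain j where "j < length p" "v = p!j" using p(2) by (metis in_set_conv_nth)
    then show ?thesis using pathchk[OF Q p(1)] by auto
  qed
qed

lemma YYV: assumes Q: "Q \<subseteq> Sg" shows "YY Q \<subseteq> V"
proof
  fix v assume v: "v \<in> YY Q"
  consider (c) "v \<in> fst ` Q" | (l) \<sigma> l where "\<sigma> \<in> Q" "l \<in> set (snd \<sigma>)" "v \<in> set l"
    | (p) p where "p \<in> FF Q" "v \<in> set p"
    using v unfolding YY_def by blast
  then show "v \<in> V"
  proof cases
    case c
    then obtain \<sigma> where "\<sigma> \<in> Q" "v = fst \<sigma>" by auto
    then show ?thesis using sv_R[of \<sigma>] Q st_csv[of "fst \<sigma>" "snd \<sigma>"] VLR by auto
  next
    case (l \<sigma> l)
    then have "v \<in> sv \<sigma>" using st_legsv[of l "snd \<sigma>" "fst \<sigma>"] by auto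
    then show ?thesis using sv_R[of \<sigma>] Q l VLR by auto
  next
    case (p p)
    then show ?thesis using p_L[of p] VLR unfolding FF_def by auto
  qed
qed

lemma YYcycle: assumes Q: "Q \<subseteq> Sg" and ne: "Q \<noteq> {}" and core: "\<forall>x\<in>Q. 2 \<le> dq P ea eb Q x"
  shows "\<exists>C \<subseteq> YY Q. is_cycle E C"
proof (rule cycle_exists)
  show "\<And>x y. E x y \<Longrightarrow> E y x" using Esym by blast
  show "\<And>x. \<not> E x x" using Eirr by blast
  show "finite (YY Q)" using YYV[OF Q] finV finite_subset by blast
  show "YY Q \<noteq> {}" using ne unfolding YY_def by auto
  show "\<And>v. v \<in> YY Q \<Longrightarrow> \<exists>u\<in>YY Q. \<exists>w\<in>YY Q. u \<noteq> w \<and> E v u \<and> E v w"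
    using YYdeg[OF Q core] by blast
qed


lemma own1: assumes Q: "Q \<subseteq> Sg" and x: "x \<in> YY Q" and sg: "\<sigma> \<in> Sg" and xs: "x \<in> sv \<sigma>"
  shows "\<sigma> \<in> Q"
proof -
  consider (c) "x \<in> fst ` Q" | (l) \<sigma>' l where "\<sigma>' \<in> Q" "l \<in> set (snd \<sigma>')" "x \<in> set l"
    | (p) p where "p \<in> FF Q" "x \<in> set p"
    using x unfolding YY_def by blast
  then show ?thesis
  proof cases
    case c
    then obtain \<sigma>' where s': "\<sigma>' \<in> Q" "x = fst \<sigma>'" by auto
    have xs': "x \<in> sv \<sigma>'" using s' st_csv by simp
    have "\<sigma>' \<in> Sg" using s' Q by auto
    then have "\<sigma> = \<sigma>'" using sv_uniq[OF sg _ xs xs'] by simp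
    then show ?thesis using s' by simp
  next
    case (l \<sigma>' l)
    have xs': "x \<in> sv \<sigma>'" using l st_legsv[of l "snd \<sigma>'" "fst \<sigma>'"] by auto
    have "\<sigma>' \<in> Sg" using l Q by auto
    then have "\<sigma> = \<sigma>'" using sv_uniq[OF sg _ xs xs'] by simp
    then show ?thesis using l by simp
  next
    case (p p)
    have pP: "p \<in> P" using p unfolding FF_def by auto
    have "x \<in> L" using p_L[OF pP] p by auto
    moreover have "x \<in> R" using sv_R[OF sg] xs by auto
    ultimately have xS: "x \<in> S" using SLR by auto
    have "st x = \<sigma>" using st_eq[OF sg xs xS] .
    moreover have "x = hd p \<or> x = last p" using pS[OF pP p(2) xS] .
    ultimately show ?thesis using p unfolding FF_def ea_def eb_def by auto
  qed
qed

lemma own2: assumes Q: "Q \<subseteq> Sg" and x: "x \<in> YY Q" and pP: "p \<in> P" and xp: "x \<in> set p"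
  shows "p \<in> FF Q"
proof -
  have xL: "x \<in> L" using p_L[OF pP] xp by auto
  consider (c) "x \<in> fst ` Q" | (l) \<sigma>' l where "\<sigma>' \<in> Q" "l \<in> set (snd \<sigma>')" "last l \<in> UU Q" "x \<in> set l"
    | (p) q where "q \<in> FF Q" "x \<in> set q"
    using x unfolding YY_def by blast
  then show ?thesis
  proof cases
    case c
    then obtain \<sigma>' where s': "\<sigma>' \<in> Q" "x = fst \<sigma>'" by auto
    have sS: "(fst \<sigma>', snd \<sigma>') \<in> Sg" using s' Q by auto
    have "x \<in> R" using sv_R[of \<sigma>'] s' Q st_csv[of "fst \<sigma>'" "snd \<sigma>'"] by auto
    then have "x \<in> S" using xL SLR by auto
    then show ?thesis using center_notS[OF sS] s' by simp
  next
    case (l \<sigma>' l)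
    have sS: "(fst \<sigma>', snd \<sigma>') \<in> Sg" using l Q by auto
    have "x \<in> sv \<sigma>'" using l st_legsv[of l "snd \<sigma>'" "fst \<sigma>'"] by auto
    then have "x \<in> R" using sv_R[of \<sigma>'] l Q by auto
    then have xS: "x \<in> S" using xL SLR by auto
    have "x = last l" using leafleg[OF sS l(2) l(4) xS] .
    then have "x \<in> UU Q" using l by simp
    then obtain q where q: "q \<in> FF Q" "x = hd q \<or> x = last q" unfolding UU_def by auto
    have qP: "q \<in> P" using q unfolding FF_def by auto
    then have "x \<in> set q" using q p_ne by auto
    then have "q = p" using p_uniq[OF qP pP _ xp] by simp
    then show ?thesis using q by simp
  next
    case (p q)
    have qP: "q \<in> P" using p unfolding FF_def by auto
    then have "q = p" using p_uniq[OF qP pP _ xp] p by simp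
    then show ?thesis using p by simp
  qed
qed

lemma sep: assumes Q1: "Q1 \<subseteq> Sg" and Q2: "Q2 \<subseteq> Sg" and d: "Q1 \<inter> Q2 = {}"
    and x: "x \<in> YY Q1" and y: "y \<in> YY Q2"
  shows "x \<noteq> y \<and> \<not> E x y"
proof
  show "x \<noteq> y"
  proof
    assume xy: "x = y"
    have "x \<in> V" using YYV[OF Q1] x by auto
    then have "x \<in> L \<or> x \<in> R" using VLR by auto
    then show False
    proof
      assume "x \<in> L"
      then obtain p where p: "p \<in> P" "x \<in> set p" using P2 by auto
      then have "p \<in> FF Q1" "p \<in> FF Q2" using own2[OF Q1 x] own2[OF Q2 y] xy by auto
      then show False using d unfolding FF_def by auto
    next
      assume "x \<in> R"
      then obtain \<sigma> where s: "\<sigma> \<in> Sg" "x \<in> sv \<sigma>" using SD2 by auto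
      then have "\<sigma> \<in> Q1" "\<sigma> \<in> Q2" using own1[OF Q1 x] own1[OF Q2 y] xy by auto
      then show False using d by auto
    qed
  qed
  show "\<not> E x y"
  proof
    assume e: "E x y"
    from EDGE[OF e] show False
    proof
      assume "\<exists>\<sigma>\<in>Sg. x \<in> sv \<sigma> \<and> y \<in> sv \<sigma>"
      then obtain \<sigma> where s: "\<sigma> \<in> Sg" "x \<in> sv \<sigma>" "y \<in> sv \<sigma>" by auto
      then have "\<sigma> \<in> Q1" "\<sigma> \<in> Q2" using own1[OF Q1 x] own1[OF Q2 y] by auto
      then show False using d by auto
    next
      assume "\<exists>p\<in>P. x \<in> set p \<and> y \<in> set p"
      then obtain p where p: "p \<in> P" "x \<in> set p" "y \<in> set p" by auto
      then have "p \<in> FF Q1" "p \<in> FF Q2" using own2[OF Q1 x] own2[OF Q2 y] by auto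
      then show False using d unfolding FF_def by auto
    qed
  qed
qed

lemma deg_nbrs: assumes cS: "(c, legs) \<in> Sg" shows "{u\<in>V. E c u} \<subseteq> hd ` set legs"
proof
  fix u assume "u \<in> {u\<in>V. E c u}"
  then have e: "E c u" by auto
  from EDGE[OF e] show "u \<in> hd ` set legs"
  proof
    assume "\<exists>\<sigma>\<in>Sg. c \<in> sv \<sigma> \<and> u \<in> sv \<sigma>"
    then obtain \<sigma> where s: "\<sigma> \<in> Sg" "c \<in> sv \<sigma>" "u \<in> sv \<sigma>" by auto
    have "c \<in> sv (c, legs)" using st_csv by simp
    then have "\<sigma> = (c, legs)" using sv_uniq[OF s(1) cS s(2)] by simp
    then have "u \<in> star_verts c legs" using s by simp
    then have "star_edge c legs c u" using st_E[OF cS st_csv] e by blast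
    then obtain l i where l: "l \<in> set legs" "Suc i < length (c#l)" "{c, u} = {(c#l)!i, (c#l)!Suc i}"
      unfolding star_edge_def by blast
    have cn: "c \<notin> set l" using st_cnot[OF cS l(1)] .
    show ?thesis
    proof (cases i)
      case 0
      then have eq: "{c, u} = {c, l!0}" using l by simp
      have "u \<in> {c, l!0}" using eq by blast
      moreover have "u \<noteq> c" using e Eirr by blast
      ultimately have "u = l!0" by blast
      then have "u = hd l" using st_ne[OF cS l(1)] by (simp add: hd_conv_nth)
      then show ?thesis using l(1) by auto
    next
      case (Suc i')
      then have "c \<in> {l!i', l!Suc i'}" using l by auto
      moreover have "l!i' \<in> set l" "l!Suc i' \<in> set l" using l(2) Suc by auto
      ultimately show ?thesis using cn by auto
    qed
  next
    assume "\<exists>p\<in>P. c \<in> set p \<and> u \<in> set p"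
    then obtain p where "p \<in> P" "c \<in> set p" by auto
    then have "c \<in> L" using p_L by auto
    moreover have "c \<in> R" using sv_R[OF cS] st_csv[of c legs] by auto
    ultimately show ?thesis using center_notS[OF cS] SLR by auto
  qed
qed

lemma deg_eq: assumes cS: "(c, legs) \<in> Sg" shows "degree V E c = card (star_leaves legs)"
proof -
  have "hd ` set legs \<subseteq> {u\<in>V. E c u}"
  proof
    fix u assume "u \<in> hd ` set legs"
    then obtain l where l: "l \<in> set legs" "u = hd l" by auto
    have ne: "l \<noteq> []" using st_ne[OF cS l(1)] .
    have "E c u" using leg_edge[OF cS l(1), of 0] ne l(2) by (simp add: hd_conv_nth)
    then show "u \<in> {u\<in>V. E c u}" using EV by auto
  qed
  then have "{u\<in>V. E c u} = hd ` set legs" using deg_nbrs[OF cS] by auto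
  then have "degree V E c = card (hd ` set legs)" unfolding degree_def by simp
  also have "\<dots> = card (set legs)" using card_image[OF inj_hd[OF cS]] .
  also have "\<dots> = card (star_leaves legs)" unfolding star_leaves_def using card_image[OF inj_last[OF cS]] by simp
  finally show ?thesis .
qed

lemma dg_le: assumes sg: "\<sigma> \<in> Sg" shows "dgg P ea eb \<sigma> \<le> degree V E (fst \<sigma>)"
proof -
  define f where "f p = (if ea p = \<sigma> then hd p else last p)" for p
  let ?I = "{p\<in>P. ea p = \<sigma> \<or> eb p = \<sigma>}"
  have fin: "finite (star_leaves (snd \<sigma>))" unfolding star_leaves_def by simp
  have "inj_on f ?I"
  proof (rule inj_onI)
    fix p q assume p: "p \<in> ?I" and q: "q \<in> ?I" and fe: "f p = f q"
    have "f p \<in> set p" "f q \<in> set q" using p q p_ne unfolding f_def by auto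
    then show "p = q" using p_uniq[of p q "f p"] p q fe by auto
  qed
  moreover have "f ` ?I \<subseteq> star_leaves (snd \<sigma>)"
  proof
    fix s assume "s \<in> f ` ?I"
    then obtain p where p: "p \<in> ?I" "s = f p" by auto
    show "s \<in> star_leaves (snd \<sigma>)"
    proof (cases "ea p = \<sigma>")
      case True
      then show ?thesis using p st_ok[OF p_hdS[of p]] unfolding f_def ea_def by auto
    next
      case False
      then have "eb p = \<sigma>" using p by auto
      then show ?thesis using p False st_ok[OF p_lastS[of p]] unfolding f_def eb_def by auto
    qed
  qed
  ultimately have "card ?I \<le> card (star_leaves (snd \<sigma>))" using card_inj_on_le fin by blast
  also have "\<dots> = degree V E (fst \<sigma>)" using deg_eq[of "fst \<sigma>" "snd \<sigma>"] sg by simp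
  finally show ?thesis unfolding dgg_def .
qed

lemma sum_deg: "(\<Sum>\<sigma>\<in>Sg. degree V E (fst \<sigma>)) = card S"
proof -
  have "(\<Sum>\<sigma>\<in>Sg. degree V E (fst \<sigma>)) = (\<Sum>\<sigma>\<in>Sg. card (star_leaves (snd \<sigma>)))"
    using deg_eq by (intro sum.cong) auto
  also have "\<dots> = card (\<Union>\<sigma>\<in>Sg. star_leaves (snd \<sigma>))"
  proof (rule card_UN_disjoint[symmetric])
    show "finite Sg" using finSg .
    show "\<forall>i\<in>Sg. finite (star_leaves (snd i))" unfolding star_leaves_def by simp
    show "\<forall>i\<in>Sg. \<forall>j\<in>Sg. i \<noteq> j \<longrightarrow> star_leaves (snd i) \<inter> star_leaves (snd j) = {}"
    proof (intro ballI impI)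
      fix i j assume "i \<in> Sg" "j \<in> Sg" "i \<noteq> j"
      moreover have "star_leaves (snd i) \<subseteq> sv i" "star_leaves (snd j) \<subseteq> sv j"
        using leaves_sv[of "fst i" "snd i"] leaves_sv[of "fst j" "snd j"] \<open>i \<in> Sg\<close> \<open>j \<in> Sg\<close> by auto
      ultimately show "star_leaves (snd i) \<inter> star_leaves (snd j) = {}" using SD3 by blast
    qed
  qed
  also have "\<dots> = card S" using SD4 by simp
  finally show ?thesis .
qed

lemma cardS: "card S = 2 * card P"
proof -
  have "card S = card (\<Union>p\<in>P. {hd p, last p})" using P4 by simp
  also have "\<dots> = (\<Sum>p\<in>P. card {hd p, last p})"
  proof (rule card_UN_disjoint)
    show "finite P" using finP .
    show "\<forall>i\<in>P. finite {hd i, last i}" by simp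
    show "\<forall>i\<in>P. \<forall>j\<in>P. i \<noteq> j \<longrightarrow> {hd i, last i} \<inter> {hd j, last j} = {}"
    proof (intro ballI impI)
      fix i j assume ij: "i \<in> P" "j \<in> P" "i \<noteq> j"
      have "{hd i, last i} \<subseteq> set i" "{hd j, last j} \<subseteq> set j" using p_ne ij by auto
      then show "{hd i, last i} \<inter> {hd j, last j} = {}" using P3 ij by blast
    qed
  qed
  also have "\<dots> = (\<Sum>p\<in>P. 2)" using p_hl by (intro sum.cong) auto
  finally show ?thesis by simp
qed

lemma eg_all: "eg P ea eb Sg = card P"
proof -
  have "{p\<in>P. ea p \<in> Sg \<and> eb p \<in> Sg} = P"
    using st_ok p_hdS p_lastS unfolding ea_def eb_def by auto
  then show ?thesis unfolding eg_def by simp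
qed

theorem bound:
  assumes k: "1 \<le> k" and OF: "O_free k V E"
  shows "card P \<le> card Sg + (k - 1) * (2 * card Sg + 2 * Max ((\<lambda>\<sigma>. degree V E (fst \<sigma>)) ` Sg))"
proof (rule ccontr)
  define D where "D = Max ((\<lambda>\<sigma>. degree V E (fst \<sigma>)) ` Sg)"
  assume "\<not> ?thesis"
  then have lt: "card Sg + (k - 1) * (2 * card Sg + 2 * D) < eg P ea eb Sg" using eg_all D_def by simp
  have dgD: "\<forall>x\<in>Sg. dgg P ea eb x \<le> D"
  proof
    fix x assume x: "x \<in> Sg"
    have "degree V E (fst x) \<le> D" unfolding D_def using finSg x by (intro Max_ge) auto
    then show "dgg P ea eb x \<le> D" using dg_le[OF x] by simp
  qed
  obtain Qs where H1: "\<forall>i\<le>k-1. Qs i \<subseteq> Sg \<and> Qs i \<noteq> {} \<and> card (Qs i) \<le> eg P ea eb (Qs i)"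
    and H2: "\<forall>i\<le>k-1. \<forall>i'\<le>k-1. i \<noteq> i' \<longrightarrow> Qs i \<inter> Qs i' = {}"
    using pieces[OF finP dgD finSg finSg order_refl lt] by blast
  have "\<forall>i. \<exists>Q'. i \<le> k - 1 \<longrightarrow> Q' \<subseteq> Qs i \<and> Q' \<noteq> {} \<and> (\<forall>x\<in>Q'. 2 \<le> dq P ea eb Q' x)"
  proof
    fix i
    show "\<exists>Q'. i \<le> k - 1 \<longrightarrow> Q' \<subseteq> Qs i \<and> Q' \<noteq> {} \<and> (\<forall>x\<in>Q'. 2 \<le> dq P ea eb Q' x)"
    proof (cases "i \<le> k - 1")
      case True
      then have "Qs i \<subseteq> Sg" "Qs i \<noteq> {}" "card (Qs i) \<le> eg P ea eb (Qs i)" using H1 by auto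
      moreover have "finite (Qs i)" using \<open>Qs i \<subseteq> Sg\<close> finSg finite_subset by auto
      ultimately show ?thesis using core[OF finP, of "Qs i" ea eb] by blast
    qed auto
  qed
  then obtain Qc where Qc: "\<And>i. i \<le> k - 1 \<Longrightarrow> Qc i \<subseteq> Qs i \<and> Qc i \<noteq> {} \<and> (\<forall>x\<in>Qc i. 2 \<le> dq P ea eb (Qc i) x)"
    by metis
  have QcS: "\<And>i. i \<le> k - 1 \<Longrightarrow> Qc i \<subseteq> Sg" using Qc H1 by blast
  have "\<forall>i. \<exists>C. i \<le> k - 1 \<longrightarrow> C \<subseteq> YY (Qc i) \<and> is_cycle E C"
  proof
    fix i
    show "\<exists>C. i \<le> k - 1 \<longrightarrow> C \<subseteq> YY (Qc i) \<and> is_cycle E C"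
    proof (cases "i \<le> k - 1")
      case True
      then show ?thesis using YYcycle[OF QcS[OF True]] Qc[OF True] by blast
    qed auto
  qed
  then obtain Cs where Cs: "\<And>i. i \<le> k - 1 \<Longrightarrow> Cs i \<subseteq> YY (Qc i) \<and> is_cycle E (Cs i)" by metis
  have "\<exists>Cs :: nat \<Rightarrow> 'a set.
      (\<forall>i < k. Cs i \<subseteq> V \<and> is_cycle E (Cs i)) \<and>
      (\<forall>i < k. \<forall>j < k. i \<noteq> j \<longrightarrow>
          Cs i \<inter> Cs j = {} \<and> (\<forall>x \<in> Cs i. \<forall>y \<in> Cs j. \<not> E x y))"
  proof (intro exI[of _ Cs] conjI allI impI)
    fix i assume i: "i < k"
    then have i': "i \<le> k - 1" by simp
    show "Cs i \<subseteq> V" using Cs[OF i'] YYV[OF QcS[OF i']] by auto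
    show "is_cycle E (Cs i)" using Cs[OF i'] by auto
  next
    fix i j assume i: "i < k" and j: "j < k" and ij: "i \<noteq> j"
    then have i': "i \<le> k - 1" and j': "j \<le> k - 1" by auto
    have d: "Qc i \<inter> Qc j = {}" using H2 i' j' ij Qc[OF i'] Qc[OF j'] by blast
    have s: "\<forall>x\<in>Cs i. \<forall>y\<in>Cs j. x \<noteq> y \<and> \<not> E x y"
      using sep[OF QcS[OF i'] QcS[OF j'] d] Cs[OF i'] Cs[OF j'] by blast
    then show "Cs i \<inter> Cs j = {}" by blast
    show "\<forall>x\<in>Cs i. \<forall>y\<in>Cs j. \<not> E x y" using s by blast
  qed
  then show False using OF unfolding O_free_def by blast
qed

end


theorem mainTheorem18:
  "\<exists>c c' :: real. c > 0 \<and> c' > 0 \<and>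
    (\<forall>(k :: nat) (V :: nat set) E L R S \<Sigma>.
      k \<ge> 2 \<and> graph V E \<and> O_free k V E \<and>
      V = L \<union> R \<and> S = L \<inter> R \<and>
      (\<forall>x \<in> S. \<forall>y \<in> S. \<not> E x y) \<and>
      (\<forall>x \<in> L - S. \<forall>y \<in> R - S. \<not> E x y) \<and>
      paths_decomp E L S \<and>
      stars_decomp E R S \<Sigma> \<and> \<Sigma> \<noteq> {} \<and>
      (\<Sum>(ctr, legs) \<in> \<Sigma>. real (degree V E ctr)) / real (card \<Sigma>)
          \<ge> 4 * c * real k * ln (real k)
      \<longrightarrow> (\<exists>v \<in> V. real (degree V E v) \<ge> c' * real (card S) / (real k)^2))"
proof -
  have main: "\<exists>v \<in> V. real (degree V E v) \<ge> (1/12) * real (card S) / (real k)^2"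
    if H: "k \<ge> 2 \<and> graph V E \<and> O_free k V E \<and>
      V = L \<union> R \<and> S = L \<inter> R \<and>
      (\<forall>x \<in> S. \<forall>y \<in> S. \<not> E x y) \<and>
      (\<forall>x \<in> L - S. \<forall>y \<in> R - S. \<not> E x y) \<and>
      paths_decomp E L S \<and>
      stars_decomp E R S Sg \<and> Sg \<noteq> {} \<and>
      (\<Sum>(ctr, legs) \<in> Sg. real (degree V E ctr)) / real (card Sg)
          \<ge> 4 * 3 * real k * ln (real k)"
    for k :: nat and V :: "nat set" and E L R S and Sg :: "(nat \<times> nat list list) set"
  proof -
    have k2: "k \<ge> 2" and G: "graph V E" and OF: "O_free k V E" and VLR: "V = L \<union> R"
      and SLR: "S = L \<inter> R" and LS: "\<forall>x \<in> L - S. \<forall>y \<in> R - S. \<not> E x y"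
      and PD: "paths_decomp E L S" and SD: "stars_decomp E R S Sg" and ne: "Sg \<noteq> {}"
      and avg: "(\<Sum>(ctr, legs) \<in> Sg. real (degree V E ctr)) / real (card Sg) \<ge> 4 * 3 * real k * ln (real k)"
      using H by auto
    obtain P :: "nat list set" where P1: "\<forall>xs \<in> P. length xs \<ge> 2 \<and> induced_path E xs"
      and P2: "L = (\<Union>xs \<in> P. set xs)"
      and P3: "\<forall>xs \<in> P. \<forall>ys \<in> P. xs \<noteq> ys \<longrightarrow> set xs \<inter> set ys = {} \<and> (\<forall>x \<in> set xs. \<forall>y \<in> set ys. \<not> E x y)"
      and P4: "S = (\<Union>xs \<in> P. {hd xs, last xs})"
      using PD unfolding paths_decomp_def by blast
    interpret hs V E L R S P Sg
      by (unfold_locales) (use G VLR SLR LS P1 P2 P3 P4 SD in auto)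
    define D where "D = Max ((\<lambda>\<sigma>. degree V E (fst \<sigma>)) ` Sg)"
    have bnd: "card P \<le> card Sg + (k - 1) * (2 * card Sg + 2 * D)"
      using bound[of k] k2 OF unfolding D_def by simp
    have "D \<in> (\<lambda>\<sigma>. degree V E (fst \<sigma>)) ` Sg" unfolding D_def using finSg ne by (intro Max_in) auto
    then obtain \<sigma>0 where s0: "\<sigma>0 \<in> Sg" "degree V E (fst \<sigma>0) = D" by auto
    have vV: "fst \<sigma>0 \<in> V" using sv_R[OF s0(1)] st_csv[of "fst \<sigma>0" "snd \<sigma>0"] VLR by auto
    define n where "n = card Sg"
    have npos: "n > 0" using finSg ne n_def by (simp add: card_gt_0_iff)
    obtain m where km: "k = Suc m" using k2 by (cases k) auto
    have natb: "card S \<le> 4 * k * n + 4 * k * D"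
    proof -
      have "card S = 2 * card P" using cardS .
      also have "\<dots> \<le> 2 * (n + m * (2 * n + 2 * D))" using bnd km n_def by simp
      also have "\<dots> \<le> 4 * k * n + 4 * k * D" using km by (simp add: algebra_simps)
      finally show ?thesis .
    qed
    define K where "K = real k"
    define N where "N = real n"
    define Dr where "Dr = real D"
    define s where "s = real (card S)"
    have K2: "K \<ge> 2" using k2 K_def by simp
    have Npos: "N > 0" using npos N_def by simp
    have Dr0: "Dr \<ge> 0" using Dr_def by simp
    have f4: "s \<le> 4 * (K * N) + 4 * (K * Dr)"
    proof -
      have "real (card S) \<le> real (4 * k * n + 4 * k * D)" using natb by (simp only: of_nat_le_iff)
      then show ?thesis unfolding s_def K_def N_def Dr_def by simp
    qed
    have sumeq: "(\<Sum>(ctr, legs) \<in> Sg. real (degree V E ctr)) = s"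
    proof -
      have "(\<Sum>(ctr, legs) \<in> Sg. real (degree V E ctr)) = (\<Sum>\<sigma>\<in>Sg. real (degree V E (fst \<sigma>)))"
        by (simp add: case_prod_beta)
      also have "\<dots> = real (\<Sum>\<sigma>\<in>Sg. degree V E (fst \<sigma>))" by simp
      also have "\<dots> = s" using sum_deg s_def by simp
      finally show ?thesis .
    qed
    have f1: "12 * K * ln K * N \<le> s"
    proof -
      have "4 * 3 * K * ln K \<le> s / N" using avg sumeq unfolding K_def N_def n_def by simp
      then show ?thesis using Npos by (simp add: pos_le_divide_eq)
    qed
    have lnK: "ln K \<ge> 1/2"
    proof -
      have "ln 2 \<le> ln K" using K2 by simp
      then show ?thesis using ln2_half by simp
    qed
    have f3: "6 * (K * N) \<le> 12 * K * ln K * N"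
    proof -
      have "0 \<le> 12 * K * N" using K2 Npos by simp
      then have "12 * K * N * (1/2) \<le> 12 * K * N * ln K" by (rule mult_left_mono[OF lnK])
      then show ?thesis by (simp add: algebra_simps)
    qed
    have f5: "s \<le> 12 * (K * Dr)" using f1 f3 f4 by linarith
    have f6: "K * Dr \<le> K^2 * Dr"
    proof -
      have "K \<le> K^2" using K2 by (simp add: power2_eq_square)
      then show ?thesis using Dr0 by (rule mult_right_mono)
    qed
    have "(1/12) * s / K^2 \<le> Dr"
    proof -
      have "K^2 > 0" using K2 by simp
      moreover have "(1/12) * s \<le> Dr * K^2" using f5 f6 by (simp add: algebra_simps)
      ultimately show ?thesis by (simp add: divide_le_eq)
    qed
    then show ?thesis using vV s0 unfolding s_def K_def Dr_def by (intro bexI[of _ "fst \<sigma>0"]) auto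
  qed
  show ?thesis
    apply (rule exI[of _ "3::real"], rule exI[of _ "1/12::real"])
    apply (intro conjI allI impI)
      apply simp
     apply simp
    apply (rule main)
    apply assumption
    done
qed


end
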